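(* Let $K\ge 1$ be an integer, let $h_1,\dots,h_K>0$ and $\sigma^2>0$ be real numbers, and let $0<\epsilon<K$. For $g\in\mathbb{R}$ and $b\in\mathbb{R}^K$ let $\mathsf{MSE}(g,b)=\sum_{k=1}^{K}(g h_k b_k-1)^2+\sigma^2 g^2$ and $\mathsf{PW}(b)=\sum_{k=1}^K b_k^2$. Consider the problem of minimizing $\mathsf{PW}(b)$ over $g\in\mathbb{R}$, $b\in\mathbb{R}^K$ subject to $\mathsf{MSE}(g,b)\le\epsilon$. Put $c_k=1/h_k^2$. Then the equation $$M=\frac{\sum_{k=1}^{K}c_k\left(\frac{M}{c_k+M}\right)^2}{\epsilon-\sum_{k=1}^{K}\left(\frac{c_k}{c_k+M}\right)^2}$$ has a unique solution $M\in(0,\infty)$, and with $\tau_k=\dfrac{1}{1+M h_k^2}$ (so that $\sum_k\tau_k^2<\epsilon$), the problem has minimum value $$\mathsf{PW}^\star=\sigma^2\,\frac{\sum_{k=1}^{K}(1-\tau_k)^2/h_k^2}{\epsilon-\sum_{k=1}^{K}\tau_k^2},$$ attained at $$g^\star=\frac{1}{\sigma}\sqrt{\epsilon-\sum_{k=1}^{K}\tau_k^2},\qquad b_k^\star=\frac{\sigma M h_k}{(1+M h_k^2)\sqrt{\epsilon-\sum_{j=1}^{K}\tau_j^2}},\quad k=1,\dots,K.$$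
   Context: This models an over-the-air computation system with $K$ sensors: $h_k$ is the channel coefficient magnitude of sensor $k$, $b_k$ its transmit scaling factor, $g$ the receiver scaling factor, $\sigma^2$ the receiver noise variance and $\epsilon$ a limit on the computation mean-squared error. All variables are real, $h_k>0$, $\sigma=\sqrt{\sigma^2}>0$. *)

theory Defs
  imports Complex_Main
begin

definition MSE :: "nat \<Rightarrow> (nat \<Rightarrow> real) \<Rightarrow> real \<Rightarrow> real \<Rightarrow> (nat \<Rightarrow> real) \<Rightarrow> real" where
  "MSE K h sigma2 g b = (\<Sum>k=1..K. (g * h k * b k - 1)^2) + sigma2 * g^2"

definition PW :: "nat \<Rightarrow> (nat \<Rightarrow> real) \<Rightarrow> real" where
  "PW K b = (\<Sum>k=1..K. (b k)^2)"

definition M_eq :: "nat \<Rightarrow> (nat \<Rightarrow> real) \<Rightarrow> real \<Rightarrow> real \<Rightarrow> bool" where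
  "M_eq K h eps M \<longleftrightarrow>
     M = (\<Sum>k=1..K. (1 / (h k)^2) * (M / (1 / (h k)^2 + M))^2)
         / (eps - (\<Sum>k=1..K. ((1 / (h k)^2) / (1 / (h k)^2 + M))^2))"

end

theory Submission
  imports Defs
begin

lemma pt_ineq:
  fixes h M x :: real
  assumes "h > 0" "M \<ge> 0"
  shows "M / (1 + M * h^2) \<le> x^2 / h^2 + M * (x - 1)^2"
proof -
  have p: "1 + M * h^2 > 0" using assms by (simp add: add_pos_nonneg)
  have "x^2 / h^2 + M * (x - 1)^2 - M / (1 + M * h^2)
        = ((1 + M * h^2) * x - M * h^2)^2 / (h^2 * (1 + M * h^2))"
    using assms p by (simp add: field_simps power2_eq_square)
  moreover have "((1 + M * h^2) * x - M * h^2)^2 / (h^2 * (1 + M * h^2)) \<ge> 0"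
    using p assms by simp
  ultimately show ?thesis by linarith
qed

lemma sq_less: "0 < (t::real) \<Longrightarrow> t < 1 \<Longrightarrow> t^2 < t"
  using mult_strict_left_mono[of t 1 t] by (simp add: power2_eq_square)

lemma prod_aux: "(sg::real) \<noteq> 0 \<Longrightarrow> r \<noteq> 0 \<Longrightarrow> t \<noteq> 0 \<Longrightarrow>
  (1/sg)*r*h*(sg*M*h/(t*r)) = M*h^2/t"
  by (simp add: field_simps power2_eq_square)

lemma bsq_aux: "(sg::real) \<noteq> 0 \<Longrightarrow> r \<noteq> 0 \<Longrightarrow> t \<noteq> 0 \<Longrightarrow> h \<noteq> 0 \<Longrightarrow>
  (sg*M*h/(t*r))^2 = sg^2/r^2 * ((M*h^2/t)^2/h^2)"
  by (simp add: field_simps power2_eq_square)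

lemma B_eq_a:
  fixes a M :: real
  assumes "a > 0" "M > 0"
  shows "((1 / a) / (1 / a + M))^2 = (1 / (1 + M * a))^2"
proof -
  have "1 / a + M = (1 + M * a) / a" using assms by (simp add: field_simps)
  then show ?thesis using assms by simp
qed

lemma A_eq_a:
  fixes a M :: real
  assumes "a > 0" "M > 0"
  shows "(1 / a) * (M / (1 / a + M))^2 = M * (1 / (1 + M * a)) - M * (1 / (1 + M * a))^2"
proof -
  have p: "1 + M * a > 0" using assms by (simp add: add_pos_pos)
  have "1 / a + M = (1 + M * a) / a" using assms by (simp add: field_simps)
  then have "(1 / a) * (M / (1 / a + M))^2 = M^2 * a / (1 + M*a)^2"
    using assms by (simp add: power2_eq_square)
  also have "\<dots> = M * (1 / (1 + M * a)) - M * (1 / (1 + M * a))^2"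
  proof -
    define t where "t = 1 + M * a"
    have t0: "t \<noteq> 0" using p t_def by simp
    have "M * (1/t) - M*(1/t)^2 = M*(t-1)/t^2" using t0 by (simp add: field_simps power2_eq_square)
    also have "\<dots> = M^2 * a / t^2" using t_def by (simp add: power2_eq_square)
    finally show ?thesis using t_def by simp
  qed
  finally show ?thesis .
qed

lemma N_eq_a:
  fixes a M :: real
  assumes "a > 0" "M > 0"
  shows "(1 - 1 / (1 + M * a))^2 / a = M * (1 / (1 + M * a)) - M * (1 / (1 + M * a))^2"
proof -
  have p: "1 + M * a > 0" using assms by (simp add: add_pos_pos)
  have "1 - 1 / (1 + M * a) = M * a / (1 + M * a)" using p by (simp add: field_simps)
  then have "(1 - 1 / (1 + M * a))^2 / a = M^2 * a / (1 + M*a)^2"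
    using assms by (simp add: power2_eq_square)
  also have "\<dots> = M * (1 / (1 + M * a)) - M * (1 / (1 + M * a))^2"
  proof -
    define t where "t = 1 + M * a"
    have t0: "t \<noteq> 0" using p t_def by simp
    have "M * (1/t) - M*(1/t)^2 = M*(t-1)/t^2" using t0 by (simp add: field_simps power2_eq_square)
    also have "\<dots> = M^2 * a / t^2" using t_def by (simp add: power2_eq_square)
    finally show ?thesis using t_def by simp
  qed
  finally show ?thesis .
qed


theorem theorem2:
  fixes K :: nat and h :: "nat \<Rightarrow> real" and sigma2 eps :: real
  assumes K: "K \<ge> 1"
    and h: "\<And>k. k \<in> {1..K} \<Longrightarrow> h k > 0"
    and sigma2: "sigma2 > 0"
    and eps: "0 < eps" "eps < real K"
  shows "(\<exists>!M. M > 0 \<and> M_eq K h eps M) \<and>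
    (\<forall>M. M > 0 \<and> M_eq K h eps M \<longrightarrow>
      (let tau = (\<lambda>k. 1 / (1 + M * (h k)^2));
           S = (\<Sum>k=1..K. (tau k)^2);
           sigma = sqrt sigma2;
           PWopt = sigma2 * (\<Sum>k=1..K. (1 - tau k)^2 / (h k)^2) / (eps - S);
           gopt = (1 / sigma) * sqrt (eps - S);
           bopt = (\<lambda>k. sigma * M * h k / ((1 + M * (h k)^2) * sqrt (eps - S)))
       in S < eps
          \<and> MSE K h sigma2 gopt bopt \<le> eps
          \<and> PW K bopt = PWopt
          \<and> (\<forall>g b. MSE K h sigma2 g b \<le> eps \<longrightarrow> PWopt \<le> PW K b)))"
proof -
  define f where "f = (\<lambda>M. \<Sum>k=1..K. 1 / (1 + M * (h k)^2))"
  have ne: "{1..K} \<noteq> {}" using K by simp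
  have h2: "\<And>k. k \<in> {1..K} \<Longrightarrow> (h k)^2 > 0" using h by (metis zero_less_power)
  have tpos: "\<And>M k. M \<ge> 0 \<Longrightarrow> k \<in> {1..K} \<Longrightarrow> 1 + M * (h k)^2 > 0"
    using h2 by (simp add: add_pos_nonneg)
  have Sless: "(\<Sum>k=1..K. (1 / (1 + M * (h k)^2))^2) < f M" if M: "M > 0" for M
    unfolding f_def
  proof (rule sum_strict_mono)
    fix k assume k: "k \<in> {1..K}"
    have "1 + M * (h k)^2 > 1" using M h2[OF k] by simp
    then have "0 < 1 / (1 + M * (h k)^2)" "1 / (1 + M * (h k)^2) < 1" by auto
    then show "(1 / (1 + M * (h k)^2))^2 < 1 / (1 + M * (h k)^2)"
      by (rule sq_less)
  qed (use ne in auto)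
  have eqv: "M_eq K h eps M \<longleftrightarrow> f M = eps" if M: "M > 0" for M
  proof -
    let ?A = "\<Sum>k=1..K. (1 / (h k)^2) * (M / (1 / (h k)^2 + M))^2"
    let ?B = "\<Sum>k=1..K. ((1 / (h k)^2) / (1 / (h k)^2 + M))^2"
    let ?S = "\<Sum>k=1..K. (1 / (1 + M * (h k)^2))^2"
    have B: "?B = ?S" by (rule sum.cong) (use B_eq_a[OF h2 M] in auto)
    have "?A = (\<Sum>k=1..K. M * (1 / (1 + M * (h k)^2)) - M * (1 / (1 + M * (h k)^2))^2)"
      by (rule sum.cong) (use A_eq_a[OF h2 M] in auto)
    also have "\<dots> = M * f M - M * ?S"
      unfolding f_def by (simp add: sum_subtractf sum_distrib_left)
    finally have A: "?A = M * f M - M * ?S" .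
    show ?thesis
    proof
      assume e: "M_eq K h eps M"
      then have e': "M = ?A / (eps - ?B)" unfolding M_eq_def .
      have "eps - ?B \<noteq> 0" using e' M by auto
      then have "M * (eps - ?B) = ?A" using e' by (simp add: field_simps)
      then have "M * eps = M * f M" using A B by (simp add: algebra_simps)
      then show "f M = eps" using M by simp
    next
      assume e: "f M = eps"
      have "?S < eps" using Sless[OF M] e by simp
      then have d: "eps - ?B > 0" using B by simp
      have "?A = M * (eps - ?B)" using A B e by (simp add: algebra_simps)
      then show "M_eq K h eps M" unfolding M_eq_def using d by simp
    qed
  qed
  have mono: "f y < f x" if "0 \<le> x" "x < y" for x y
    unfolding f_def
  proof (rule sum_strict_mono)
    fix k assume k: "k \<in> {1..K}"
    have "x * (h k)^2 < y * (h k)^2" using that h2[OF k] by simp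
    then show "1 / (1 + y * (h k)^2) < 1 / (1 + x * (h k)^2)"
      using tpos[OF that(1) k] by (simp add: divide_strict_left_mono)
  qed (use ne in auto)
  have ex: "\<exists>M>0. f M = eps"
  proof -
    define C where "C = (\<Sum>k=1..K. 1 / (h k)^2)"
    have Cpos: "C > 0" unfolding C_def using h2 ne by (intro sum_pos) auto
    define M1 where "M1 = C / eps + 1"
    have M1: "M1 > 0" using Cpos eps by (simp add: M1_def add_pos_pos)
    have "f M1 < (\<Sum>k=1..K. 1 / (M1 * (h k)^2))"
      unfolding f_def
    proof (rule sum_strict_mono)
      fix k assume k: "k \<in> {1..K}"
      have "0 < M1 * (h k)^2" using M1 h2[OF k] by simp
      then show "1 / (1 + M1 * (h k)^2) < 1 / (M1 * (h k)^2)"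
        by (simp add: divide_strict_left_mono)
    qed (use ne in auto)
    also have "\<dots> = C / M1" unfolding C_def by (simp add: sum_divide_distrib mult.commute)
    also have "\<dots> \<le> eps"
    proof -
      have "C / eps \<le> M1" by (simp add: M1_def)
      then have "C \<le> M1 * eps" using eps by (simp add: field_simps)
      then show ?thesis using M1 by (simp add: field_simps)
    qed
    finally have f1: "f M1 \<le> eps" by simp
    have f0: "eps \<le> f 0" unfolding f_def using eps by simp
    have cont: "\<forall>x. 0 \<le> x \<and> x \<le> M1 \<longrightarrow> isCont f x"
    proof (intro allI impI)
      fix x :: real assume x: "0 \<le> x \<and> x \<le> M1"
      show "isCont f x" unfolding f_def
        by (intro continuous_intros) (use tpos x in force)
    qed
    obtain x where x: "0 \<le> x" "x \<le> M1" "f x = eps"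
      using IVT2[OF f1 f0 _ cont] M1 by auto
    have "x \<noteq> 0" using x eps unfolding f_def by auto
    then show ?thesis using x by (intro exI[of _ x]) auto
  qed
  have part1: "\<exists>!M. M > 0 \<and> M_eq K h eps M"
  proof -
    obtain M where M: "M > 0" "f M = eps" using ex by auto
    show ?thesis
    proof (rule ex1I[of _ M])
      show "M > 0 \<and> M_eq K h eps M" using M eqv by auto
    next
      fix y assume y: "y > 0 \<and> M_eq K h eps y"
      then have fy: "f y = eps" using eqv by auto
      show "y = M"
      proof (rule ccontr)
        assume "y \<noteq> M"
        then have "y < M \<or> M < y" by auto
        then show False using mono[of y M] mono[of M y] y M fy by auto
      qed
    qed
  qed
  have part2: "\<forall>M. M > 0 \<and> M_eq K h eps M \<longrightarrow>
      (let tau = (\<lambda>k. 1 / (1 + M * (h k)^2));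
           S = (\<Sum>k=1..K. (tau k)^2);
           sigma = sqrt sigma2;
           PWopt = sigma2 * (\<Sum>k=1..K. (1 - tau k)^2 / (h k)^2) / (eps - S);
           gopt = (1 / sigma) * sqrt (eps - S);
           bopt = (\<lambda>k. sigma * M * h k / ((1 + M * (h k)^2) * sqrt (eps - S)))
       in S < eps
          \<and> MSE K h sigma2 gopt bopt \<le> eps
          \<and> PW K bopt = PWopt
          \<and> (\<forall>g b. MSE K h sigma2 g b \<le> eps \<longrightarrow> PWopt \<le> PW K b))"
  proof (intro allI impI)
    fix M assume MM: "M > 0 \<and> M_eq K h eps M"
    then have M: "M > 0" and fM: "f M = eps" using eqv by auto
    define tau where "tau = (\<lambda>k. 1 / (1 + M * (h k)^2))"
    define S where "S = (\<Sum>k=1..K. (tau k)^2)"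
    define sigma where "sigma = sqrt sigma2"
    define PWopt where "PWopt = sigma2 * (\<Sum>k=1..K. (1 - tau k)^2 / (h k)^2) / (eps - S)"
    define gopt where "gopt = (1 / sigma) * sqrt (eps - S)"
    define bopt where "bopt = (\<lambda>k. sigma * M * h k / ((1 + M * (h k)^2) * sqrt (eps - S)))"
    have ftau: "f M = (\<Sum>k=1..K. tau k)" unfolding f_def tau_def by simp
    have SE: "S < eps" using Sless[OF M] fM unfolding S_def tau_def by simp
    have sig: "sigma > 0" "sigma^2 = sigma2" unfolding sigma_def using sigma2 by auto
    have d: "eps - S > 0" using SE by simp
    have sq: "(sqrt (eps - S))^2 = eps - S" "sqrt (eps - S) > 0" using d by auto
    have N: "(\<Sum>k=1..K. (1 - tau k)^2 / (h k)^2) = M * (eps - S)"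
    proof -
      have "(\<Sum>k=1..K. (1 - tau k)^2 / (h k)^2) = (\<Sum>k=1..K. M * tau k - M * (tau k)^2)"
        by (rule sum.cong) (use N_eq_a[OF h2 M] in \<open>auto simp: tau_def\<close>)
      also have "\<dots> = M * f M - M * S"
        unfolding ftau S_def by (simp add: sum_subtractf sum_distrib_left)
      finally show ?thesis using fM by (simp add: algebra_simps)
    qed
    have PWo: "PWopt = sigma2 * M" unfolding PWopt_def N using d by simp
    have prod: "gopt * h k * bopt k = 1 - tau k" if k: "k \<in> {1..K}" for k
    proof -
      have t: "1 + M * (h k)^2 > 0" using tpos M k by auto
      have "gopt * h k * bopt k = M * (h k)^2 / (1 + M * (h k)^2)"
        unfolding gopt_def bopt_def using sig sq t by (intro prod_aux) auto
      also have "\<dots> = 1 - tau k" unfolding tau_def using t by (simp add: field_simps)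
      finally show ?thesis .
    qed
    have mse: "MSE K h sigma2 gopt bopt = eps"
    proof -
      have "(\<Sum>k=1..K. (gopt * h k * bopt k - 1)^2) = S"
        unfolding S_def by (rule sum.cong) (auto simp: prod power2_eq_square)
      moreover have "sigma2 * gopt^2 = eps - S"
        unfolding gopt_def using sig sq sigma2 by (simp add: power_mult_distrib power_divide)
      ultimately show ?thesis unfolding MSE_def by simp
    qed
    have pw: "PW K bopt = PWopt"
    proof -
      have "PW K bopt = (\<Sum>k=1..K. sigma2 / (eps - S) * ((1 - tau k)^2 / (h k)^2))"
        unfolding PW_def
      proof (rule sum.cong)
        fix k assume k: "k \<in> {1..K}"
        have t: "1 + M * (h k)^2 > 0" using tpos M k by auto
        have hk: "h k > 0" using h k by auto
        have "1 - tau k = M * (h k)^2 / (1 + M * (h k)^2)"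
          unfolding tau_def using t by (simp add: field_simps)
        then show "(bopt k)^2 = sigma2 / (eps - S) * ((1 - tau k)^2 / (h k)^2)"
          unfolding bopt_def using sig sq t hk bsq_aux[of sigma "sqrt (eps - S)" "1 + M * (h k)^2" "h k" M]
          by simp
      qed simp
      also have "\<dots> = sigma2 / (eps - S) * (\<Sum>k=1..K. (1 - tau k)^2 / (h k)^2)"
        by (rule sum_distrib_left[symmetric])
      also have "\<dots> = PWopt" unfolding PWopt_def by simp
      finally show ?thesis .
    qed
    have opt: "\<forall>g b. MSE K h sigma2 g b \<le> eps \<longrightarrow> PWopt \<le> PW K b"
    proof (intro allI impI)
      fix g b assume fe: "MSE K h sigma2 g b \<le> eps"
      have g0: "g \<noteq> 0"
      proof
        assume "g = 0"
        then have "MSE K h sigma2 g b = real K" unfolding MSE_def by simp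
        then show False using fe eps by simp
      qed
      have key: "M * tau k - M * (g * h k * b k - 1)^2 \<le> (g * b k)^2" if k: "k \<in> {1..K}" for k
      proof -
        have hk: "h k > 0" using h k by auto
        have "M / (1 + M * (h k)^2) \<le> (g * h k * b k)^2 / (h k)^2 + M * (g * h k * b k - 1)^2"
          using pt_ineq[OF hk, of M] M by simp
        moreover have "(g * h k * b k)^2 / (h k)^2 = (g * b k)^2"
          using hk by (simp add: power_mult_distrib)
        ultimately show ?thesis unfolding tau_def by simp
      qed
      have "M * eps - M * (\<Sum>k=1..K. (g * h k * b k - 1)^2)
            = (\<Sum>k=1..K. M * tau k - M * (g * h k * b k - 1)^2)"
        using fM ftau by (simp add: sum_subtractf sum_distrib_left[symmetric])
      also have "\<dots> \<le> (\<Sum>k=1..K. (g * b k)^2)" by (rule sum_mono) (use key in auto)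
      also have "\<dots> = g^2 * PW K b" unfolding PW_def
        by (simp add: sum_distrib_left power_mult_distrib)
      finally have i1: "M * eps - M * (\<Sum>k=1..K. (g * h k * b k - 1)^2) \<le> g^2 * PW K b" .
      have i2: "(\<Sum>k=1..K. (g * h k * b k - 1)^2) \<le> eps - sigma2 * g^2"
        using fe unfolding MSE_def by simp
      have "M * (sigma2 * g^2) \<le> M * eps - M * (\<Sum>k=1..K. (g * h k * b k - 1)^2)"
        using mult_left_mono[OF i2, of M] M by (simp add: algebra_simps)
      with i1 have "g^2 * (sigma2 * M) \<le> g^2 * PW K b" by (simp add: algebra_simps)
      moreover have "g^2 > 0" using g0 by simp
      ultimately show "PWopt \<le> PW K b" unfolding PWo by simp
    qed
    have fin: "S < eps \<and> MSE K h sigma2 gopt bopt \<le> eps \<and> PW K bopt = PWopt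
          \<and> (\<forall>g b. MSE K h sigma2 g b \<le> eps \<longrightarrow> PWopt \<le> PW K b)"
      using SE mse pw opt by simp
    show "let tau = (\<lambda>k. 1 / (1 + M * (h k)^2));
           S = (\<Sum>k=1..K. (tau k)^2);
           sigma = sqrt sigma2;
           PWopt = sigma2 * (\<Sum>k=1..K. (1 - tau k)^2 / (h k)^2) / (eps - S);
           gopt = (1 / sigma) * sqrt (eps - S);
           bopt = (\<lambda>k. sigma * M * h k / ((1 + M * (h k)^2) * sqrt (eps - S)))
       in S < eps
          \<and> MSE K h sigma2 gopt bopt \<le> eps
          \<and> PW K bopt = PWopt
          \<and> (\<forall>g b. MSE K h sigma2 g b \<le> eps \<longrightarrow> PWopt \<le> PW K b)"
      using fin unfolding Let_def bopt_def gopt_def PWopt_def S_def sigma_def tau_def .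
  qed
  show ?thesis using part1 part2 by blast
qed

end
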